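(* In the brand-effects model, let the greedy allocation be defined by, for $k=1,\dots,s$ in order, placing in position $k$ the not-yet-placed ad with the highest normalized eCPM for position $k$. Then (i) for every instance, the total expected welfare of the greedy allocation is at least half of the maximum possible total expected welfare; and (ii) this bound is tight: for every $c>\frac12$ there is an instance in which the greedy allocation's total expected welfare is less than $c$ times the maximum possible total expected welfare.
   Context: Brand-effects model: there are $s$ positions and a set of advertisers, each either a brand advertiser or a non-brand advertiser; advertiser $i$ has quality score $q_i \ge 0$ and bid $b_i \ge 0$, and its eCPM bid is $b_i q_i$. Each position $k$ has two quality scores $\beta_k$ and $\eta_k$, both non-increasing in $k$, normalized so $\beta_1=\eta_1=1$. A brand (resp. non-brand) advertiser with quality $q$ shown in position $k$ is clicked with probability $\beta_k q$ (resp. $\eta_k q$). An allocation places distinct advertisers in the positions; its total expected welfare is $\sum_j b_{(j)} p_{(j)}$, where $b_{(j)}$ and $p_{(j)}$ are the bid and click probability of the ad in position $j$. The normalized eCPM of advertiser $i$ for position $k$ is $\beta_k b_i q_i$ if $i$ is a brand advertiser and $\eta_k b_i q_i$ if $i$ is a non-brand advertiser. *)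

theory Defs
  imports Main "HOL-Library.Library"
begin

text \<open>An instance of the brand-effects model. Positions are indexed 0..<npos
  (position k here is position k+1 of the paper); advertisers are indexed 0..<nadv.\<close>
record inst =
  npos  :: nat
  nadv  :: nat
  brand :: "nat \<Rightarrow> bool"
  qual  :: "nat \<Rightarrow> real"
  bid   :: "nat \<Rightarrow> real"
  beta  :: "nat \<Rightarrow> real"
  eta   :: "nat \<Rightarrow> real"

definition valid_inst :: "inst \<Rightarrow> bool" where
  "valid_inst I \<longleftrightarrow>
     (\<forall>i < nadv I. 0 \<le> qual I i \<and> 0 \<le> bid I i) \<and>
     beta I 0 = 1 \<and> eta I 0 = 1 \<and>
     (\<forall>j k. j \<le> k \<and> k < npos I \<longrightarrow> beta I k \<le> beta I j \<and> eta I k \<le> eta I j) \<and>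
     (\<forall>k < npos I. 0 \<le> beta I k \<and> 0 \<le> eta I k)"

definition click_prob :: "inst \<Rightarrow> nat \<Rightarrow> nat \<Rightarrow> real" where
  "click_prob I k i = (if brand I i then beta I k else eta I k) * qual I i"

definition norm_ecpm :: "inst \<Rightarrow> nat \<Rightarrow> nat \<Rightarrow> real" where
  "norm_ecpm I k i = (if brand I i then beta I k else eta I k) * (bid I i * qual I i)"

definition allocations :: "inst \<Rightarrow> (nat \<Rightarrow> nat option) set" where
  "allocations I = {f. (\<forall>k. npos I \<le> k \<longrightarrow> f k = None) \<and>
                       (\<forall>k i. f k = Some i \<longrightarrow> i < nadv I) \<and>
                       (\<forall>k k' i. f k = Some i \<and> f k' = Some i \<longrightarrow> k = k')}"

definition welfare :: "inst \<Rightarrow> (nat \<Rightarrow> nat option) \<Rightarrow> real" where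
  "welfare I f = (\<Sum>k<npos I. case f k of None \<Rightarrow> 0 | Some i \<Rightarrow> bid I i * click_prob I k i)"

definition opt_welfare :: "inst \<Rightarrow> real" where
  "opt_welfare I = Max (welfare I ` allocations I)"

definition remaining :: "inst \<Rightarrow> (nat \<Rightarrow> nat option) \<Rightarrow> nat \<Rightarrow> nat set" where
  "remaining I g k = {i. i < nadv I \<and> (\<forall>j<k. g j \<noteq> Some i)}"

definition is_greedy :: "inst \<Rightarrow> (nat \<Rightarrow> nat option) \<Rightarrow> bool" where
  "is_greedy I g \<longleftrightarrow>
     (\<forall>k. npos I \<le> k \<longrightarrow> g k = None) \<and>
     (\<forall>k < npos I.
        (remaining I g k = {} \<longrightarrow> g k = None) \<and>
        (remaining I g k \<noteq> {} \<longrightarrow>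
           (\<exists>i \<in> remaining I g k. g k = Some i \<and>
              (\<forall>j \<in> remaining I g k. norm_ecpm I k j \<le> norm_ecpm I k i))))"

end

theory Submission
  imports Defs
begin

lemma fin_alloc: "finite (allocations I)"
proof -
  let ?S = "PiE {..<npos I} (\<lambda>_. insert None (Some ` {..<nadv I}))"
  have "allocations I \<subseteq> (\<lambda>h k. if k < npos I then h k else None) ` ?S"
  proof
    fix f assume f: "f \<in> allocations I"
    let ?h = "restrict f {..<npos I}"
    have "f \<in> Pi {..<npos I} (\<lambda>_. insert None (Some ` {..<nadv I}))"
    proof
      fix k assume "k \<in> {..<npos I}"
      show "f k \<in> insert None (Some ` {..<nadv I})"
        using f by (cases "f k") (auto simp: allocations_def)
    qed
    hence "?h \<in> ?S" by (simp add: restrict_PiE_iff)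
    moreover have "f = (\<lambda>k. if k<npos I then ?h k else None)"
      using f by (auto simp: allocations_def)
    ultimately show "f \<in> (\<lambda>h k. if k < npos I then h k else None) ` ?S" by blast
  qed
  then show ?thesis by (rule finite_subset) (intro finite_imageI finite_PiE; auto)
qed

lemma welfare_eq: "welfare I f = (\<Sum>k<npos I. case f k of None \<Rightarrow> 0 | Some i \<Rightarrow> norm_ecpm I k i)"
  unfolding welfare_def
  by (rule sum.cong) (auto simp: click_prob_def norm_ecpm_def split: option.split)

lemma opt_ge: "f \<in> allocations I \<Longrightarrow> welfare I f \<le> opt_welfare I"
  unfolding opt_welfare_def by (rule Max_ge) (auto simp: fin_alloc)

lemma ecpm_nonneg: "valid_inst I \<Longrightarrow> k < npos I \<Longrightarrow> i < nadv I \<Longrightarrow> 0 \<le> norm_ecpm I k i"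
  unfolding valid_inst_def norm_ecpm_def by auto

lemma ecpm_mono: "valid_inst I \<Longrightarrow> j \<le> k \<Longrightarrow> k < npos I \<Longrightarrow> i < nadv I \<Longrightarrow>
   norm_ecpm I k i \<le> norm_ecpm I j i"
  unfolding norm_ecpm_def
  apply (rule mult_right_mono)
  unfolding valid_inst_def by auto

lemma part1:
  assumes v: "valid_inst I" and gr: "is_greedy I g" and f: "f \<in> allocations I"
  shows "welfare I f \<le> 2 * welfare I g"
proof -
  let ?n = "npos I"
  define F where "F k = (case f k of None \<Rightarrow> 0 | Some i \<Rightarrow> norm_ecpm I k i)" for k
  define G where "G k = (case g k of None \<Rightarrow> 0 | Some i \<Rightarrow> norm_ecpm I k i)" for k
  have gnone: "\<And>k. ?n \<le> k \<Longrightarrow> g k = None" using gr by (simp add: is_greedy_def)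
  have grem: "\<And>k i. g k = Some i \<Longrightarrow> k < ?n \<and> i \<in> remaining I g k"
  proof -
    fix k i assume gk: "g k = Some i"
    have "k < ?n" using gnone gk by (metis not_le option.distinct(1))
    moreover then have "remaining I g k \<noteq> {}" using gr gk by (auto simp: is_greedy_def)
    ultimately show "k < ?n \<and> i \<in> remaining I g k" using gr gk by (auto simp: is_greedy_def)
  qed
  have ginj: "\<And>j k i. g j = Some i \<Longrightarrow> g k = Some i \<Longrightarrow> j = k"
  proof -
    fix j k i assume a: "g j = Some i" "g k = Some i"
    show "j = k"
    proof (rule ccontr)
      assume "j \<noteq> k"
      then consider "j < k" | "k < j" by linarith
      then show False using grem[OF a(1)] grem[OF a(2)] a by cases (auto simp: remaining_def)
    qed
  qed
  have Gnn: "\<And>k. 0 \<le> G k"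
  proof -
    fix k show "0 \<le> G k"
    proof (cases "g k")
      case (Some i) then show ?thesis using grem[OF Some] ecpm_nonneg[OF v]
        by (auto simp: G_def remaining_def)
    qed (simp add: G_def)
  qed
  have finj: "\<And>k k' i. f k = Some i \<Longrightarrow> f k' = Some i \<Longrightarrow> k = k'"
    using f by (auto simp: allocations_def)
  define K where "K = {k. k < ?n \<and> f k \<noteq> None \<and> (\<exists>j<k. g j = f k)}"
  define \<sigma> where "\<sigma> k = (SOME j. j < k \<and> g j = f k)" for k
  have sig: "\<And>k. k \<in> K \<Longrightarrow> \<sigma> k < k \<and> g (\<sigma> k) = f k"
    unfolding \<sigma>_def K_def by (rule someI_ex) auto
  have claim: "\<And>k. k < ?n \<Longrightarrow> F k \<le> G k + (if k \<in> K then G (\<sigma> k) else 0)"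
  proof -
    fix k assume k: "k < ?n"
    show "F k \<le> G k + (if k \<in> K then G (\<sigma> k) else 0)"
    proof (cases "f k")
      case None then show ?thesis using Gnn by (simp add: F_def)
    next
      case (Some i)
      have i: "i < nadv I" using f Some by (auto simp: allocations_def)
      show ?thesis
      proof (cases "i \<in> remaining I g k")
        case True
        then have "remaining I g k \<noteq> {}" by auto
        then obtain i' where "g k = Some i'" "norm_ecpm I k i \<le> norm_ecpm I k i'"
          using gr k True by (auto simp: is_greedy_def)
        then have "F k \<le> G k" using Some by (simp add: F_def G_def)
        then show ?thesis using Gnn[of "\<sigma> k"] by simp
      next
        case False
        then obtain j where "j < k" "g j = Some i" using i by (auto simp: remaining_def)
        then have kK: "k \<in> K" using k Some by (auto simp: K_def)
        from sig[OF kK] Some have s: "\<sigma> k < k" "g (\<sigma> k) = Some i" by auto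
        have "F k = norm_ecpm I k i" using Some by (simp add: F_def)
        also have "\<dots> \<le> norm_ecpm I (\<sigma> k) i" using ecpm_mono[OF v _ k i] s by simp
        also have "\<dots> = G (\<sigma> k)" using s by (simp add: G_def)
        finally show ?thesis using Gnn[of k] kK by simp
      qed
    qed
  qed
  have "welfare I f = (\<Sum>k<?n. F k)" by (simp add: welfare_eq F_def)
  also have "\<dots> \<le> (\<Sum>k<?n. G k + (if k \<in> K then G (\<sigma> k) else 0))"
    by (rule sum_mono) (use claim in auto)
  also have "\<dots> = (\<Sum>k<?n. G k) + (\<Sum>k\<in>K. G (\<sigma> k))"
    by (simp add: sum.distrib sum.If_cases K_def Int_def conj_commute)
  also have "(\<Sum>k\<in>K. G (\<sigma> k)) = (\<Sum>j\<in>\<sigma> ` K. G j)"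
  proof -
    have "inj_on \<sigma> K"
    proof (rule inj_onI)
      fix a b assume ab: "a \<in> K" "b \<in> K" "\<sigma> a = \<sigma> b"
      then have "f a = f b" using sig[OF ab(1)] sig[OF ab(2)] by simp
      moreover obtain i where "f a = Some i" using ab(1) by (auto simp: K_def)
      ultimately show "a = b" using finj by metis
    qed
    then show ?thesis by (simp add: sum.reindex)
  qed
  also have "(\<Sum>j\<in>\<sigma> ` K. G j) \<le> (\<Sum>k<?n. G k)"
  proof (rule sum_mono2)
    show "\<sigma> ` K \<subseteq> {..<?n}" using sig by (force simp: K_def)
  qed (use Gnn in auto)
  finally have "welfare I f \<le> 2 * (\<Sum>k<?n. G k)" by simp
  moreover have "welfare I g = (\<Sum>k<?n. G k)" by (simp add: welfare_eq G_def)
  ultimately show ?thesis by simp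
qed

lemma part1': "valid_inst I \<Longrightarrow> is_greedy I g \<Longrightarrow> welfare I g \<ge> opt_welfare I / 2"
proof -
  assume v: "valid_inst I" and gr: "is_greedy I g"
  have ne: "allocations I \<noteq> {}" by (auto simp: allocations_def)
  have "opt_welfare I \<in> welfare I ` allocations I"
    unfolding opt_welfare_def by (rule Max_in) (use fin_alloc ne in auto)
  then obtain f where "f \<in> allocations I" "opt_welfare I = welfare I f" by auto
  with part1[OF v gr] show ?thesis by (simp add: mult.commute)
qed

theorem theorem6:
  shows "(\<forall>I g. valid_inst I \<and> is_greedy I g \<longrightarrow> welfare I g \<ge> opt_welfare I / 2) \<and>
         (\<forall>c::real. c > 1/2 \<longrightarrow>
            (\<exists>I. valid_inst I \<and> (\<exists>g. is_greedy I g) \<and>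
                 (\<forall>g. is_greedy I g \<longrightarrow> welfare I g < c * opt_welfare I)))"
proof (intro conjI allI impI)
  fix I g assume "valid_inst I \<and> is_greedy I g"
  then show "welfare I g \<ge> opt_welfare I / 2" using part1' by blast
next
  fix c :: real assume c: "c > 1/2"
  define t where "t = 1 / (2*c)"
  have t: "0 < t" "t < 1" "c * t = 1/2" using c by (auto simp: t_def field_simps)
  define I where "I = \<lparr>npos = 2, nadv = 2, brand = (\<lambda>i. i = 0),
     qual = (\<lambda>i. if i = 0 then 1 else t), bid = (\<lambda>_. 1), beta = (\<lambda>_. 1),
     eta = (\<lambda>k. if k = 0 then 1 else 0)\<rparr>"
  have v: "valid_inst I" using t by (auto simp: I_def valid_inst_def)
  define g0 where "g0 = (\<lambda>k::nat. if k = 0 then Some (0::nat) else if k = 1 then Some 1 else None)"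
  have rem0: "\<And>g. remaining I g 0 = {0, 1}" by (auto simp: remaining_def I_def)
  have "is_greedy I g0"
    unfolding is_greedy_def
  proof (intro conjI allI impI)
    fix k assume "npos I \<le> k" then show "g0 k = None" by (simp add: g0_def I_def)
  next
    fix k assume k: "k < npos I" "remaining I g0 k = {}"
    have "1 \<in> remaining I g0 k" using k by (auto simp: remaining_def I_def g0_def)
    then show "g0 k = None" using k by simp
  next
    fix k assume k: "k < npos I" "remaining I g0 k \<noteq> {}"
    then have "k = 0 \<or> k = 1" by (simp add: I_def) linarith
    then show "\<exists>i\<in>remaining I g0 k. g0 k = Some i \<and>
              (\<forall>j\<in>remaining I g0 k. norm_ecpm I k j \<le> norm_ecpm I k i)"
    proof
      assume "k = 0" then show ?thesis using t
      proof -
        have "0 \<in> remaining I g0 0" by (simp add: rem0)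
        moreover have "\<forall>j\<in>remaining I g0 0. norm_ecpm I 0 j \<le> norm_ecpm I 0 0"
          using t by (simp add: rem0 norm_ecpm_def I_def)
        ultimately show ?thesis using \<open>k = 0\<close> by (auto simp: g0_def)
      qed
    next
      assume k1: "k = 1"
      have "remaining I g0 1 = {1}" by (auto simp: remaining_def I_def g0_def)
      then show ?thesis using k1 by (simp add: g0_def)
    qed
  qed
  moreover have "\<forall>g. is_greedy I g \<longrightarrow> welfare I g < c * opt_welfare I"
  proof (intro allI impI)
    fix g assume gr: "is_greedy I g"
    have "\<exists>i\<in>remaining I g 0. g 0 = Some i \<and>
              (\<forall>j\<in>remaining I g 0. norm_ecpm I 0 j \<le> norm_ecpm I 0 i)"
    proof -
      have "0 < npos I" "remaining I g 0 \<noteq> {}" by (simp add: I_def, simp only: rem0, simp)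
      then show ?thesis using gr unfolding is_greedy_def by blast
    qed
    then obtain i where i: "g 0 = Some i" "\<forall>j\<in>{0,1}. norm_ecpm I 0 j \<le> norm_ecpm I 0 i"
      unfolding rem0 by blast
    have g0': "g 0 = Some 0"
    proof (rule ccontr)
      assume "g 0 \<noteq> Some 0" then have "i \<noteq> 0" using i by auto
      have "norm_ecpm I 0 0 \<le> norm_ecpm I 0 i" using i by auto
      then show False using t \<open>i \<noteq> 0\<close> by (simp add: norm_ecpm_def I_def)
    qed
    have w1: "(case g 1 of None \<Rightarrow> 0 | Some i \<Rightarrow> norm_ecpm I 1 i) \<le> 0"
    proof (cases "g 1")
      case (Some j)
      have n1: "1 < npos I" by (simp add: I_def)
      have "remaining I g 1 \<noteq> {}" using gr Some n1 unfolding is_greedy_def by force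
      then have "j \<in> remaining I g 1" using gr Some n1 unfolding is_greedy_def by force
      then have "j = 1" using g0' by (auto simp: remaining_def I_def)
      then show ?thesis using Some by (simp add: norm_ecpm_def I_def)
    qed simp
    have wg: "welfare I g \<le> 1"
    proof -
      have np: "npos I = 2" by (simp add: I_def)
      have "welfare I g = norm_ecpm I 0 0 + (case g 1 of None \<Rightarrow> 0 | Some i \<Rightarrow> norm_ecpm I 1 i)"
      proof -
        have "{..<2::nat} = {0, 1}" by auto
        then show ?thesis unfolding welfare_eq np using g0' by (simp split: option.split)
      qed
      moreover have "norm_ecpm I 0 0 = 1" by (simp add: norm_ecpm_def I_def)
      ultimately show ?thesis using w1 by simp
    qed
    define f where "f = (\<lambda>k::nat. if k = 0 then Some (1::nat) else if k = 1 then Some 0 else None)"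
    have fa: "f \<in> allocations I" by (auto simp: allocations_def f_def I_def split: if_splits)
    have wf: "welfare I f = t + 1"
      by (simp add: welfare_eq I_def numeral_2_eq_2 norm_ecpm_def f_def)
    have "1 < c * (t + 1)" using t c by (simp add: distrib_left)
    also have "\<dots> \<le> c * opt_welfare I" using opt_ge[OF fa] wf c by simp
    finally show "welfare I g < c * opt_welfare I" using wg by simp
  qed
  ultimately show "\<exists>I. valid_inst I \<and> (\<exists>g. is_greedy I g) \<and>
                 (\<forall>g. is_greedy I g \<longrightarrow> welfare I g < c * opt_welfare I)" using v by blast
qed

end
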